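(* Let $A\in\mathcal C$ and let $X$ be a finite independent subset of $A$. Then there is a finite independent subset $Y$ of $A$ with $X\subseteq Y$ such that $A\setminus{\rm desc}(Y)$ is finite.
   Context: Fix an integer $q\ge2$; $T=T_q$ is the digraph whose vertices are finite sequences over $\{0,\ldots,q-1\}$ with edges $(\bar w,\bar wi)$. For a digraph, an $s$-arc ($s\ge0$) from $u_0$ to $u_s$ is a sequence $u_0\ldots u_s$ with each $(u_i,u_{i+1})$ an edge and $u_{i-1}\ne u_{i+1}$ for $0<i<s$; ${\rm desc}(u)$ is the set of vertices reachable from $u$ by some $s$-arc, $s\ge0$ (including $u$), and ${\rm desc}(Y)=\bigcup_{y\in Y}{\rm desc}(y)$. A descendant-closed set $B$ (i.e. ${\rm desc}(b)\subseteq B$ for $b\in B$) is finitely generated if $B={\rm desc}(Z)$ for a finite $Z$. A subset is independent if the descendant sets of any two distinct members are disjoint. $\mathcal C$ is the class of digraphs $A$ such that ${\rm desc}(a)\cong T$ (as induced subdigraph) for every $a\in A$, $A={\rm desc}(Z)$ for some finite $Z$, and ${\rm desc}(a)\cap{\rm desc}(b)$ is finitely generated for all $a,b\in A$. *)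

theory Defs
  imports Main
begin

definition digraph :: "'a set \<Rightarrow> ('a \<times> 'a) set \<Rightarrow> bool" where
  "digraph V E \<longleftrightarrow> E \<subseteq> V \<times> V"

definition is_arc :: "('a \<times> 'a) set \<Rightarrow> 'a list \<Rightarrow> bool" where
  "is_arc E xs \<longleftrightarrow> xs \<noteq> [] \<and>
     (\<forall>i. Suc i < length xs \<longrightarrow> (xs ! i, xs ! Suc i) \<in> E) \<and>
     (\<forall>i. 0 < i \<and> Suc i < length xs \<longrightarrow> xs ! (i - 1) \<noteq> xs ! Suc i)"

definition desc :: "('a \<times> 'a) set \<Rightarrow> 'a \<Rightarrow> 'a set" where
  "desc E u = {last xs | xs. is_arc E xs \<and> hd xs = u}"

definition desc_set :: "('a \<times> 'a) set \<Rightarrow> 'a set \<Rightarrow> 'a set" where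
  "desc_set E Y = (\<Union>y\<in>Y. desc E y)"

definition fin_generated :: "('a \<times> 'a) set \<Rightarrow> 'a set \<Rightarrow> bool" where
  "fin_generated E B \<longleftrightarrow> (\<exists>Z. finite Z \<and> B = desc_set E Z)"

definition independent :: "('a \<times> 'a) set \<Rightarrow> 'a set \<Rightarrow> bool" where
  "independent E X \<longleftrightarrow> (\<forall>x\<in>X. \<forall>y\<in>X. x \<noteq> y \<longrightarrow> desc E x \<inter> desc E y = {})"

definition T_verts :: "nat \<Rightarrow> nat list set" where
  "T_verts q = {w. set w \<subseteq> {..<q}}"

definition T_edges :: "nat \<Rightarrow> (nat list \<times> nat list) set" where
  "T_edges q = {(w, w @ [i]) | w i. w \<in> T_verts q \<and> i < q}"

definition induced_iso :: "'a set \<Rightarrow> ('a \<times> 'a) set \<Rightarrow> 'b set \<Rightarrow> ('b \<times> 'b) set \<Rightarrow> bool" where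
  "induced_iso V1 E1 V2 E2 \<longleftrightarrow> (\<exists>f. bij_betw f V1 V2 \<and>
     (\<forall>x\<in>V1. \<forall>y\<in>V1. (x, y) \<in> E1 \<longleftrightarrow> (f x, f y) \<in> E2))"

definition classC :: "nat \<Rightarrow> 'a set \<Rightarrow> ('a \<times> 'a) set \<Rightarrow> bool" where
  "classC q V E \<longleftrightarrow> digraph V E \<and>
     (\<forall>a\<in>V. induced_iso (desc E a) E (T_verts q) (T_edges q)) \<and>
     (\<exists>Z. finite Z \<and> V = desc_set E Z) \<and>
     (\<forall>a\<in>V. \<forall>b\<in>V. fin_generated E (desc E a \<inter> desc E b))"

end

theory Submission imports Defs begin

lemma arc_walk:
  assumes "is_arc E xs"
  shows "i < length xs \<Longrightarrow> (hd xs, xs ! i) \<in> E\<^sup>*"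
proof (induction i)
  case 0
  then show ?case using assms by (simp add: hd_conv_nth is_arc_def)
next
  case (Suc i)
  then have "(xs ! i, xs ! Suc i) \<in> E" using assms by (simp add: is_arc_def)
  with Suc show ?case by (meson Suc_lessD rtrancl.rtrancl_into_rtrancl)
qed

lemma desc_rt: "v \<in> desc E u \<Longrightarrow> (u,v) \<in> E\<^sup>*"
proof -
  assume "v \<in> desc E u"
  then obtain xs where xs: "is_arc E xs" "hd xs = u" "last xs = v" unfolding desc_def by blast
  then have "xs \<noteq> []" by (simp add: is_arc_def)
  then show ?thesis using arc_walk[OF xs(1), of "length xs - 1"] xs by (simp add: last_conv_nth)
qed

lemma desc_self: "u \<in> desc E u"
  unfolding desc_def is_arc_def by (rule CollectI, rule exI[of _ "[u]"]) auto

lemma desc_step: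
  assumes "v \<in> desc E u" "(v,w) \<in> E"
  shows "w \<in> desc E u"
proof -
  obtain xs where xs: "is_arc E xs" "hd xs = u" "last xs = v" using assms(1) unfolding desc_def by blast
  have ne: "xs \<noteq> []" using xs by (simp add: is_arc_def)
  show ?thesis
  proof (cases "length xs \<ge> 2 \<and> xs ! (length xs - 2) = w")
    case True
    let ?ys = "take (length xs - 1) xs"
    have "is_arc E ?ys" using xs(1) True unfolding is_arc_def by auto
    moreover have "hd ?ys = u" using xs True ne by (simp add: hd_conv_nth)
    moreover have "last ?ys = w"
    proof -
      have "?ys \<noteq> []" using True ne by (simp add: take_eq_Nil)
      then have "last ?ys = ?ys ! (length xs - 2)" using True by (simp add: last_conv_nth numeral_2_eq_2)
      also have "\<dots> = xs ! (length xs - 2)" using True by (subst nth_take) auto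
      finally show ?thesis using True by simp
    qed
    ultimately show ?thesis unfolding desc_def by blast
  next
    case False
    note nb = False
    let ?ys = "xs @ [w]"
    have e: "\<forall>i. Suc i < length ?ys \<longrightarrow> (?ys ! i, ?ys ! Suc i) \<in> E"
    proof (intro allI impI)
      fix i assume i: "Suc i < length ?ys"
      show "(?ys ! i, ?ys ! Suc i) \<in> E"
      proof (cases "Suc i < length xs")
        case True then show ?thesis using xs(1) by (simp add: is_arc_def nth_append)
      next
        case False
        then have "i = length xs - 1" using i by (simp; linarith)
        then show ?thesis using xs ne assms(2) by (simp add: nth_append last_conv_nth)
      qed
    qed
    have b: "\<forall>i. 0 < i \<and> Suc i < length ?ys \<longrightarrow> ?ys ! (i - 1) \<noteq> ?ys ! Suc i"
    proof (intro allI impI)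
      fix i assume i: "0 < i \<and> Suc i < length ?ys"
      show "?ys ! (i - 1) \<noteq> ?ys ! Suc i"
      proof (cases "Suc i < length xs")
        case True
        then have "i - 1 < length xs" by simp
        then show ?thesis using xs(1) i True by (simp add: is_arc_def nth_append)
      next
        case False
        then have "i = length xs - 1" using i by (simp; linarith)
        then show ?thesis using False i nb by (auto simp add: nth_append numeral_2_eq_2)
      qed
    qed
    have "is_arc E ?ys" using e b unfolding is_arc_def by simp
    moreover have "hd ?ys = u" using xs ne by simp
    moreover have "last ?ys = w" by simp
    ultimately show ?thesis unfolding desc_def by (metis (mono_tags, lifting) CollectI)
  qed
qed

lemma desc_eq: "desc E u = {v. (u,v) \<in> E\<^sup>*}"
proof
  show "desc E u \<subseteq> {v. (u, v) \<in> E\<^sup>*}" using desc_rt by fast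
  show "{v. (u, v) \<in> E\<^sup>*} \<subseteq> desc E u"
  proof
    fix v assume "v \<in> {v. (u, v) \<in> E\<^sup>*}"
    then have "(u,v) \<in> E\<^sup>*" by simp
    then show "v \<in> desc E u"
      by (induction rule: rtrancl_induct) (auto intro: desc_self desc_step)
  qed
qed

lemma desc_trans: "x \<in> desc E z \<Longrightarrow> y \<in> desc E x \<Longrightarrow> y \<in> desc E z"
  unfolding desc_eq by auto

definition isoT :: "nat \<Rightarrow> ('a \<times> 'a) set \<Rightarrow> 'a \<Rightarrow> ('a \<Rightarrow> nat list) \<Rightarrow> bool" where
  "isoT q E z f \<longleftrightarrow> bij_betw f (desc E z) (T_verts q) \<and>
     (\<forall>x\<in>desc E z. \<forall>y\<in>desc E z. (x, y) \<in> E \<longleftrightarrow> (f x, f y) \<in> T_edges q)"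

lemma tree_fwd:
  assumes "isoT q E z f" "x \<in> desc E z" "y \<in> desc E x"
  shows "\<exists>r. f y = f x @ r"
proof -
  have "(x,y) \<in> E\<^sup>*" using assms(3) by (simp add: desc_eq)
  then show ?thesis
  proof (induction rule: rtrancl_induct)
    case base then show ?case by auto
  next
    case (step y y')
    have yz: "y \<in> desc E z" using assms(2) step(1) by (simp add: desc_eq)
    have y'z: "y' \<in> desc E z" using yz step(2) by (rule desc_step)
    have "(f y, f y') \<in> T_edges q" using assms(1) yz y'z step(2) unfolding isoT_def by blast
    then obtain i where "f y' = f y @ [i]" unfolding T_edges_def by blast
    then show ?case using step(3) by auto
  qed
qed

lemma tree_bwd:
  assumes "isoT q E z f" "x \<in> desc E z" "y \<in> desc E z" "f y = f x @ r"
  shows "y \<in> desc E x"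
proof -
  have bij: "bij_betw f (desc E z) (T_verts q)" using assms(1) unfolding isoT_def by blast
  let ?g = "inv_into (desc E z) f"
  have "\<forall>r. f x @ r \<in> T_verts q \<longrightarrow> ?g (f x @ r) \<in> desc E x"
  proof (intro allI)
    fix r show "f x @ r \<in> T_verts q \<longrightarrow> ?g (f x @ r) \<in> desc E x"
    proof (induction r rule: rev_induct)
      case Nil
      have "?g (f x) = x" using bij assms(2) by (simp add: bij_betw_imp_inj_on)
      then show ?case by (simp add: desc_self)
    next
      case (snoc i r)
      show ?case
      proof
        assume m: "f x @ r @ [i] \<in> T_verts q"
        then have m1: "f x @ r \<in> T_verts q" and iq: "i < q" unfolding T_verts_def by auto
        let ?a = "?g (f x @ r)" and ?b = "?g (f x @ r @ [i])"
        have ad: "?a \<in> desc E z" using bij m1 by (metis bij_betw_def inv_into_into)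
        have bd: "?b \<in> desc E z" using bij m by (metis bij_betw_def inv_into_into)
        have fa: "f ?a = f x @ r" using bij m1 by (simp add: bij_betw_inv_into_right)
        have fb: "f ?b = f x @ r @ [i]" using bij m by (simp add: bij_betw_inv_into_right)
        have "(f ?a, f ?b) \<in> T_edges q" using fa fb m1 iq unfolding T_edges_def by auto
        then have "(?a, ?b) \<in> E" using assms(1) ad bd unfolding isoT_def by blast
        moreover have "?a \<in> desc E x" using snoc m1 by blast
        ultimately show "?b \<in> desc E x" by (simp add: desc_step)
      qed
    qed
  qed
  moreover have "f x @ r \<in> T_verts q" using bij assms(3,4) by (metis bij_betwE)
  moreover have "?g (f y) = y" using bij assms(3) by (simp add: bij_betw_imp_inj_on)
  ultimately show ?thesis using assms(4) by metis
qed

lemma tree_nested: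
  assumes "isoT q E z f" "a \<in> desc E z" "b \<in> desc E z" "w \<in> desc E a" "w \<in> desc E b"
  shows "b \<in> desc E a \<or> a \<in> desc E b"
proof -
  obtain r s where r: "f w = f a @ r" and s: "f w = f b @ s"
    using tree_fwd[OF assms(1,2,4)] tree_fwd[OF assms(1,3,5)] by blast
  then have "(\<exists>t. f b = f a @ t) \<or> (\<exists>t. f a = f b @ t)"
    by (metis append_eq_append_conv2)
  then show ?thesis using tree_bwd[OF assms(1,2,3)] tree_bwd[OF assms(1,3,2)] by blast
qed

lemma tree_len:
  assumes "isoT q E z f" "a \<in> desc E z" "b \<in> desc E a"
  shows "length (f a) \<le> length (f b)"
  using tree_fwd[OF assms] by auto

lemma tree_antisym:
  assumes "isoT q E z f" "a \<in> desc E z" "b \<in> desc E a" "a \<in> desc E b"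
  shows "a = b"
proof -
  have bz: "b \<in> desc E z" using assms desc_trans by metis
  obtain r s where "f b = f a @ r" "f a = f b @ s"
    using tree_fwd[OF assms(1,2,3)] tree_fwd[OF assms(1) bz assms(4)] by blast
  then have "f a = f b" by auto
  then show ?thesis using assms(1,2) bz unfolding isoT_def by (meson bij_betw_imp_inj_on inj_onD)
qed

theorem lemma3p1:
  fixes q :: nat and V :: "'a set" and E :: "('a \<times> 'a) set" and X :: "'a set"
  assumes "q \<ge> 2"
    and "classC q V E"
    and "X \<subseteq> V" and "finite X" and "independent E X"
  shows "\<exists>Y. finite Y \<and> Y \<subseteq> V \<and> independent E Y \<and> X \<subseteq> Y \<and>
             finite (V - desc_set E Y)"
proof -
  note XV = assms(3) and finX = assms(4) and indX = assms(5)
  have isoV: "\<forall>a\<in>V. induced_iso (desc E a) E (T_verts q) (T_edges q)"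
    and fg: "\<forall>a\<in>V. \<forall>b\<in>V. fin_generated E (desc E a \<inter> desc E b)"
    using assms(2) unfolding classC_def by blast+
  obtain Z where finZ: "finite Z" and VZ: "V = desc_set E Z"
    using assms(2) unfolding classC_def by blast
  define fz where "fz a = (SOME f. isoT q E a f)" for a
  have iso: "isoT q E a (fz a)" if "a \<in> V" for a
  proof -
    have "\<exists>f. isoT q E a f" using isoV that unfolding induced_iso_def isoT_def by blast
    then show ?thesis unfolding fz_def by (rule someI_ex)
  qed
  have ZV: "Z \<subseteq> V" using VZ desc_self unfolding desc_set_def by fast
  have descV: "desc E a \<subseteq> V" if aV: "a \<in> V" for a
  proof -
    obtain z where "z \<in> Z" "a \<in> desc E z" using aV VZ unfolding desc_set_def by blast
    then show ?thesis using VZ desc_trans unfolding desc_set_def by fast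
  qed
  define S where "S = Z \<union> X"
  have SV: "S \<subseteq> V" using ZV XV S_def by blast
  have finS: "finite S" using finZ finX S_def by blast
  define W where "W s t = (SOME W. finite W \<and> desc E s \<inter> desc E t = desc_set E W)" for s t
  have Wp: "finite (W s t) \<and> desc E s \<inter> desc E t = desc_set E (W s t)" if "s \<in> S" "t \<in> S" for s t
  proof -
    have "\<exists>W. finite W \<and> desc E s \<inter> desc E t = desc_set E W"
      using fg SV that unfolding fin_generated_def by blast
    then show ?thesis unfolding W_def by (rule someI_ex)
  qed
  define Fs where "Fs = (\<Union>s\<in>S. \<Union>t\<in>S. W s t)"
  have finFs: "finite Fs" unfolding Fs_def using finS Wp by (intro finite_UN_I) auto
  define N where "N = Suc (Max ((\<lambda>(z,w). length (fz z w)) ` (Z \<times> Fs)))"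
  have Nbig: "length (fz z w) < N" if "z \<in> Z" "w \<in> Fs" for z w
  proof -
    have "length (fz z w) \<le> Max ((\<lambda>(z,w). length (fz z w)) ` (Z \<times> Fs))"
      using that finZ finFs by (intro Max_ge) auto
    then show ?thesis unfolding N_def by simp
  qed
  have deep: "v \<in> desc E s"
    if "z \<in> Z" "s \<in> S" "v \<in> desc E z" "length (fz z v) = N" "w \<in> desc E v" "w \<in> desc E s" for z s v w
  proof -
    have zS: "z \<in> S" using that S_def by blast
    have "w \<in> desc E z" using that desc_trans by metis
    then have "w \<in> desc_set E (W z s)" using Wp[OF zS that(2)] that(6) by blast
    then obtain w' where w': "w' \<in> W z s" "w \<in> desc E w'" unfolding desc_set_def by blast
    have w'F: "w' \<in> Fs" using w' zS that(2) unfolding Fs_def by blast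
    have "w' \<in> desc_set E (W z s)" using w' desc_self unfolding desc_set_def by fast
    then have w'z: "w' \<in> desc E z" and w's: "w' \<in> desc E s" using Wp[OF zS that(2)] by blast+
    have isz: "isoT q E z (fz z)" using iso ZV that(1) by blast
    have "w' \<in> desc E v \<or> v \<in> desc E w'"
      using tree_nested[OF isz that(3) w'z that(5) w'(2)] .
    moreover have "w' \<notin> desc E v"
    proof
      assume "w' \<in> desc E v"
      then have "length (fz z v) \<le> length (fz z w')" using tree_len[OF isz that(3)] by blast
      then show False using Nbig[OF that(1) w'F] that(4) by simp
    qed
    ultimately show ?thesis using w's desc_trans by metis
  qed
  define L where "L = {v. \<exists>z\<in>Z. v \<in> desc E z \<and> length (fz z v) = N}"
  have LV: "L \<subseteq> V" using VZ unfolding L_def desc_set_def by blast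
  have finL: "finite L"
  proof -
    have "L \<subseteq> (\<Union>z\<in>Z. inv_into (desc E z) (fz z) ` {xs. set xs \<subseteq> {..<q} \<and> length xs = N})"
    proof
      fix v assume "v \<in> L"
      then obtain z where z: "z \<in> Z" "v \<in> desc E z" "length (fz z v) = N" unfolding L_def by blast
      have bij: "bij_betw (fz z) (desc E z) (T_verts q)" using iso ZV z(1) unfolding isoT_def by blast
      have "fz z v \<in> T_verts q" using bij z(2) by (meson bij_betwE)
      then have "fz z v \<in> {xs. set xs \<subseteq> {..<q} \<and> length xs = N}" using z(3) unfolding T_verts_def by blast
      moreover have "v = inv_into (desc E z) (fz z) (fz z v)" using bij z(2) by (simp add: bij_betw_imp_inj_on)
      ultimately show "v \<in> (\<Union>z\<in>Z. inv_into (desc E z) (fz z) ` {xs. set xs \<subseteq> {..<q} \<and> length xs = N})"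
        using z(1) by blast
    qed
    moreover have "finite (\<Union>z\<in>Z. inv_into (desc E z) (fz z) ` {xs. set xs \<subseteq> {..<q} \<and> length xs = N})"
      using finZ by (intro finite_UN_I) (auto intro: finite_lists_length_eq)
    ultimately show ?thesis by (rule finite_subset)
  qed
  define DX where "DX = desc_set E X"
  define Ds where "Ds = {v\<in>L. desc E v \<inter> DX = {}}"
  define Y' where "Y' = {v\<in>Ds. \<forall>u\<in>Ds. v \<in> desc E u \<longrightarrow> u = v}"
  define Y where "Y = X \<union> Y'"
  have finDs: "finite Ds" using finL Ds_def by simp
  have Y'L: "Y' \<subseteq> L" unfolding Y'_def Ds_def by blast
  have antisym: "a = b" if "a \<in> V" "b \<in> desc E a" "a \<in> desc E b" for a b
    using tree_antisym[OF iso[OF that(1)] desc_self that(2,3)] .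
  have nestL: "v2 \<in> desc E v1 \<or> v1 \<in> desc E v2"
    if h: "v1 \<in> L" "v2 \<in> L" "w \<in> desc E v1" "w \<in> desc E v2" for v1 v2 w
  proof -
    obtain z1 where z1: "z1 \<in> Z" "v1 \<in> desc E z1" "length (fz z1 v1) = N" using h(1) L_def by blast
    obtain z2 where z2: "z2 \<in> Z" "v2 \<in> desc E z2" "length (fz z2 v2) = N" using h(2) L_def by blast
    have "z2 \<in> S" using z2 S_def by blast
    have "w \<in> desc E z2" using z2(2) that(4) desc_trans by metis
    then have "v1 \<in> desc E z2" using deep[OF z1(1) \<open>z2 \<in> S\<close> z1(2,3) that(3)] by blast
    then show ?thesis using tree_nested[OF iso z2(2) _ that(4) that(3)] ZV z2(1) \<open>v1 \<in> desc E z2\<close> by blast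
  qed
  have indY: "independent E Y"
    unfolding independent_def
  proof (intro ballI impI)
    fix a b assume a: "a \<in> Y" and b: "b \<in> Y" and ab: "a \<noteq> b"
    show "desc E a \<inter> desc E b = {}"
    proof (cases "a \<in> X")
      case aX: True
      show ?thesis
      proof (cases "b \<in> X")
        case True then show ?thesis using aX ab indX unfolding independent_def by blast
      next
        case False
        then have "b \<in> Ds" using b Y_def Y'_def by blast
        then show ?thesis using aX unfolding Ds_def DX_def desc_set_def by blast
      qed
    next
      case aX: False
      then have aD: "a \<in> Y'" using a Y_def by blast
      show ?thesis
      proof (cases "b \<in> X")
        case True then show ?thesis using aD unfolding Y'_def Ds_def DX_def desc_set_def by blast
      next
        case False
        then have bD: "b \<in> Y'" using b Y_def by blast
        show ?thesis
        proof (rule ccontr)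
          assume "desc E a \<inter> desc E b \<noteq> {}"
          then obtain w where "w \<in> desc E a" "w \<in> desc E b" by blast
          then have "b \<in> desc E a \<or> a \<in> desc E b" using nestL aD bD Y'L by blast
          then show False using aD bD ab unfolding Y'_def by blast
        qed
      qed
    qed
  qed
  have cover: "v \<in> desc_set E Y"
    if "z \<in> Z" "v \<in> desc E z" "N \<le> length (fz z v)" for z v
  proof -
    have isz: "isoT q E z (fz z)" using iso ZV that(1) by blast
    have bij: "bij_betw (fz z) (desc E z) (T_verts q)" using isz unfolding isoT_def by blast
    have fv: "fz z v \<in> T_verts q" using bij that(2) by (meson bij_betwE)
    define p where "p = take N (fz z v)"
    have pT: "p \<in> T_verts q" using fv unfolding p_def T_verts_def by (meson mem_Collect_eq set_take_subset subset_trans)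
    define u where "u = inv_into (desc E z) (fz z) p"
    have uz: "u \<in> desc E z" using bij pT unfolding u_def by (metis bij_betw_def inv_into_into)
    have fu: "fz z u = p" using bij pT unfolding u_def by (simp add: bij_betw_inv_into_right)
    have vu: "v \<in> desc E u" using tree_bwd[OF isz uz that(2), of "drop N (fz z v)"] fu p_def by simp
    have lu: "length (fz z u) = N" using fu p_def that(3) by simp
    have uL: "u \<in> L" using that(1) uz lu L_def by blast
    show ?thesis
    proof (cases "desc E u \<inter> DX = {}")
      case False
      note zZ = that(1)
      then obtain x w where x: "x \<in> X" "w \<in> desc E u" "w \<in> desc E x"
        using False unfolding DX_def desc_set_def by blast
      have xS: "x \<in> S" unfolding S_def using x(1) by blast
      have "u \<in> desc E x" using deep[OF zZ xS uz lu x(2,3)] .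
      then have vx: "v \<in> desc E x" using desc_trans[OF _ vu] by blast
      have xY: "x \<in> Y" unfolding Y_def using x(1) by blast
      show ?thesis unfolding desc_set_def using xY vx by blast
    next
      case True
      then have uD: "u \<in> Ds" using uL Ds_def by blast
      define P where "P m = (m \<in> Ds \<and> u \<in> desc E m)" for m
      define An where "An m = {a\<in>Ds. m \<in> desc E a}" for m
      have "P u" unfolding P_def using uD desc_self by fast
      then have "\<exists>x. P x \<and> (\<forall>y. P y \<longrightarrow> card (An x) \<le> card (An y))"
        by (rule ex_has_least_nat)
      then obtain m where Pm: "P m" and mmin0: "\<forall>y. P y \<longrightarrow> card (An m) \<le> card (An y)"
        by (elim exE conjE)
      have mmin: "card (An m) \<le> card (An y)" if "P y" for y using mmin0 that by blast
      have mD: "m \<in> Ds" and um: "u \<in> desc E m" using Pm unfolding P_def by auto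
      have mV: "m \<in> V" using mD Ds_def LV by blast
      have "m \<in> Y'"
        unfolding Y'_def
      proof (intro CollectI conjI ballI impI)
        show "m \<in> Ds" using mD .
        fix u' assume u'D: "u' \<in> Ds" and mu': "m \<in> desc E u'"
        show "u' = m"
        proof (rule ccontr)
          assume ne: "u' \<noteq> m"
          have "P u'" unfolding P_def using u'D desc_trans[OF mu' um] by simp
          then have c1: "card (An m) \<le> card (An u')" by (rule mmin)
          have sub: "An u' \<subseteq> An m" unfolding An_def using mu' by (auto intro: desc_trans)
          have "m \<notin> An u'" using antisym[OF mV _ mu'] ne unfolding An_def by blast
          moreover have "m \<in> An m" using mD desc_self unfolding An_def by fast
          ultimately have "An u' \<subset> An m" using sub by blast
          moreover have "finite (An m)" by (rule finite_subset[OF _ finDs]) (auto simp: An_def)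
          ultimately have "card (An u') < card (An m)" by (rule psubset_card_mono[rotated])
          then show False using c1 by simp
        qed
      qed
      moreover have "v \<in> desc E m" using desc_trans[OF um vu] .
      ultimately show ?thesis unfolding Y_def desc_set_def by blast
    qed
  qed
  have "V - desc_set E Y \<subseteq> (\<Union>z\<in>Z. inv_into (desc E z) (fz z) ` {xs. set xs \<subseteq> {..<q} \<and> length xs \<le> N})"
  proof
    fix v assume v: "v \<in> V - desc_set E Y"
    then obtain z where z: "z \<in> Z" "v \<in> desc E z" using VZ unfolding desc_set_def by blast
    have "length (fz z v) < N" using cover[OF z] v by (meson DiffD2 not_le)
    have bij: "bij_betw (fz z) (desc E z) (T_verts q)" using iso ZV z(1) unfolding isoT_def by blast
    have "fz z v \<in> T_verts q" using bij z(2) by (meson bij_betwE)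
    then have "fz z v \<in> {xs. set xs \<subseteq> {..<q} \<and> length xs \<le> N}"
      using \<open>length (fz z v) < N\<close> unfolding T_verts_def by auto
    moreover have "v = inv_into (desc E z) (fz z) (fz z v)" using bij z(2) by (simp add: bij_betw_imp_inj_on)
    ultimately show "v \<in> (\<Union>z\<in>Z. inv_into (desc E z) (fz z) ` {xs. set xs \<subseteq> {..<q} \<and> length xs \<le> N})"
      using z(1) by blast
  qed
  moreover have "finite (\<Union>z\<in>Z. inv_into (desc E z) (fz z) ` {xs. set xs \<subseteq> {..<q} \<and> length xs \<le> N})"
    using finZ by (intro finite_UN_I) (auto intro: finite_lists_length_le)
  ultimately have "finite (V - desc_set E Y)" by (rule finite_subset)
  moreover have "finite Y" unfolding Y_def using finX finite_subset[OF Y'L finL] by simp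
  moreover have "Y \<subseteq> V" using XV Y'L LV Y_def by blast
  ultimately show ?thesis using indY by (intro exI[of _ Y]) (auto simp: Y_def)
qed

end
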